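(* Let $\Lambda=\{\Lambda_\omega\in B(\mathcal H,\mathcal K_\omega):\omega\in\Omega\}$ and $\Theta=\{\Theta_\omega\in B(\mathcal H,\mathcal K_\omega):\omega\in\Omega\}$ be strongly disjoint Parseval continuous $g$-frames for $\mathcal H$ and let $L_1,L_2\in B(\mathcal H)$. Then $L_1^*L_1+L_2^*L_2=I$ if and only if $\{\Lambda_\omega L_1+\Theta_\omega L_2\in B(\mathcal H,\mathcal K_\omega):\omega\in\Omega\}$ is a Parseval continuous $g$-frame. In particular, for $\alpha,\beta\in\mathbb C$, $\{\alpha\Lambda_\omega+\beta\Theta_\omega:\omega\in\Omega\}$ is a Parseval continuous $g$-frame if and only if $|\alpha|^2+|\beta|^2=1$.
   Context: $\mathcal H$ is a complex Hilbert space, $(\Omega,\mu)$ a measure space with positive measure $\mu$, and $\{\mathcal K_\omega:\omega\in\Omega\}$ a family of complex Hilbert spaces. A map $F$ on $\Omega$ with $F(\omega)\in\mathcal K_\omega$ is strongly measurable if it is measurable as a map $\Omega\to\bigoplus_\omega\mathcal K_\omega$; $\widehat{\mathcal K}$ is the Hilbert space of strongly measurable such $F$ with $\int_\Omega\|F(\omega)\|^2d\mu<\infty$, inner product $\langle F,G\rangle=\int_\Omega\langle F(\omega),G(\omega)\rangle d\mu$. A family $\Lambda=\{\Lambda_\omega\in B(\mathcal H,\mathcal K_\omega)\}$ is a continuous $g$-frame for $\mathcal H$ if $\omega\mapsto\Lambda_\omega f$ is strongly measurable for each $f$ and there are $0<A\le B<\infty$ with $A\|f\|^2\le\int_\Omega\|\Lambda_\omega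 f\|^2d\mu(\omega)\le B\|f\|^2$ for all $f\in\mathcal H$; it is Parseval if $\int_\Omega\|\Lambda_\omega f\|^2d\mu=\|f\|^2$ for all $f$. Its analysis operator $T_\Lambda^*:\mathcal H\to\widehat{\mathcal K}$ is $(T_\Lambda^*f)(\omega)=\Lambda_\omega f$. Two continuous $g$-frames $\Lambda,\Theta$ are strongly disjoint if $\mathrm{Range}\,T_\Lambda^*\perp\mathrm{Range}\,T_\Theta^*$ in $\widehat{\mathcal K}$. *)

theory Defs
  imports "HOL-Analysis.Analysis"
begin

class complex_vector = real_vector +
  fixes scaleC :: "complex \<Rightarrow> 'a \<Rightarrow> 'a"
  assumes scaleC_add_right: "scaleC a (x + y) = scaleC a x + scaleC a y"
    and scaleC_add_left: "scaleC (a + b) x = scaleC a x + scaleC b x"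
    and scaleC_scaleC: "scaleC a (scaleC b x) = scaleC (a * b) x"
    and scaleC_one: "scaleC 1 x = x"
    and scaleR_scaleC: "scaleR r x = scaleC (complex_of_real r) x"

class complex_inner = complex_vector + real_normed_vector +
  fixes cinner :: "'a \<Rightarrow> 'a \<Rightarrow> complex"
  assumes cinner_commute: "cinner x y = cnj (cinner y x)"
    and cinner_add_left: "cinner (x + y) z = cinner x z + cinner y z"
    and cinner_scaleC_left: "cinner (scaleC r x) y = r * cinner x y"
    and cinner_self_real: "Im (cinner x x) = 0"
    and cinner_self_nonneg: "0 \<le> Re (cinner x x)"
    and cinner_eq_zero_iff: "cinner x x = 0 \<longleftrightarrow> x = 0"
    and norm_eq_sqrt_cinner: "norm x = sqrt (Re (cinner x x))"

class chilbert_space = complex_inner + complete_space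

definition clinear :: "('a::complex_vector \<Rightarrow> 'b::complex_vector) \<Rightarrow> bool" where
  "clinear f \<longleftrightarrow> (\<forall>x y. f (x + y) = f x + f y) \<and> (\<forall>c x. f (scaleC c x) = scaleC c (f x))"

definition bounded_clinear :: "('a::complex_inner \<Rightarrow> 'b::complex_inner) \<Rightarrow> bool" where
  "bounded_clinear f \<longleftrightarrow> clinear f \<and> (\<exists>K. \<forall>x. norm (f x) \<le> norm x * K)"

definition cadjoint :: "('a::complex_inner \<Rightarrow> 'b::complex_inner) \<Rightarrow> ('b \<Rightarrow> 'a)" where
  "cadjoint L = (THE A. \<forall>x y. cinner (L x) y = cinner x (A y))"

definition closed_csubspace :: "'a::complex_inner set \<Rightarrow> bool" where
  "closed_csubspace S \<longleftrightarrow> 0 \<in> S \<and> (\<forall>x\<in>S. \<forall>y\<in>S. x + y \<in> S)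
     \<and> (\<forall>c. \<forall>x\<in>S. scaleC c x \<in> S) \<and> closed S"

text \<open>The fibres K_w are modelled as closed subspaces of one Hilbert space 'k, which plays
  the role of the direct sum of the K_w.\<close>
definition strongly_measurable :: "'w measure \<Rightarrow> ('w \<Rightarrow> 'k::complex_inner) \<Rightarrow> bool" where
  "strongly_measurable M F \<longleftrightarrow>
     (\<exists>s::nat \<Rightarrow> 'w \<Rightarrow> 'k. (\<forall>i. s i \<in> measurable M borel \<and> finite (range (s i)))
        \<and> (\<forall>\<omega>\<in>space M. (\<lambda>i. s i \<omega>) \<longlonglongrightarrow> F \<omega>))"

definition g_family ::
  "'w measure \<Rightarrow> ('w \<Rightarrow> 'k::complex_inner set) \<Rightarrow> ('w \<Rightarrow> 'h::complex_inner \<Rightarrow> 'k) \<Rightarrow> bool" where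
  "g_family M K \<Lambda> \<longleftrightarrow>
     (\<forall>\<omega>\<in>space M. bounded_clinear (\<Lambda> \<omega>) \<and> range (\<Lambda> \<omega>) \<subseteq> K \<omega>)
     \<and> (\<forall>f. strongly_measurable M (\<lambda>\<omega>. \<Lambda> \<omega> f))"

definition cont_g_frame ::
  "'w measure \<Rightarrow> ('w \<Rightarrow> 'k::complex_inner set) \<Rightarrow> ('w \<Rightarrow> 'h::complex_inner \<Rightarrow> 'k) \<Rightarrow> bool" where
  "cont_g_frame M K \<Lambda> \<longleftrightarrow> g_family M K \<Lambda> \<and>
     (\<exists>A B. 0 < A \<and> A \<le> B \<and>
       (\<forall>f. ennreal (A * (norm f)\<^sup>2) \<le> (\<integral>\<^sup>+\<omega>. ennreal ((norm (\<Lambda> \<omega> f))\<^sup>2) \<partial>M)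
          \<and> (\<integral>\<^sup>+\<omega>. ennreal ((norm (\<Lambda> \<omega> f))\<^sup>2) \<partial>M) \<le> ennreal (B * (norm f)\<^sup>2)))"

definition parseval_cont_g_frame ::
  "'w measure \<Rightarrow> ('w \<Rightarrow> 'k::complex_inner set) \<Rightarrow> ('w \<Rightarrow> 'h::complex_inner \<Rightarrow> 'k) \<Rightarrow> bool" where
  "parseval_cont_g_frame M K \<Lambda> \<longleftrightarrow> cont_g_frame M K \<Lambda> \<and>
     (\<forall>f. (\<integral>\<^sup>+\<omega>. ennreal ((norm (\<Lambda> \<omega> f))\<^sup>2) \<partial>M) = ennreal ((norm f)\<^sup>2))"

definition analysis_op :: "('w \<Rightarrow> 'h \<Rightarrow> 'k) \<Rightarrow> 'h \<Rightarrow> ('w \<Rightarrow> 'k)" where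
  "analysis_op \<Lambda> f = (\<lambda>\<omega>. \<Lambda> \<omega> f)"

definition l2_inner :: "'w measure \<Rightarrow> ('w \<Rightarrow> 'k::complex_inner) \<Rightarrow> ('w \<Rightarrow> 'k) \<Rightarrow> complex" where
  "l2_inner M F G = (LINT \<omega>|M. cinner (F \<omega>) (G \<omega>))"

definition strongly_disjoint ::
  "'w measure \<Rightarrow> ('w \<Rightarrow> 'h \<Rightarrow> 'k::complex_inner) \<Rightarrow> ('w \<Rightarrow> 'h \<Rightarrow> 'k) \<Rightarrow> bool" where
  "strongly_disjoint M \<Lambda> \<Theta> \<longleftrightarrow>
     (\<forall>F\<in>range (analysis_op \<Lambda>). \<forall>G\<in>range (analysis_op \<Theta>). l2_inner M F G = 0)"

end

theory Submission
  imports Defs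
begin

lemma cinner_add_right: "cinner x (y + z) = cinner x y + cinner (x::'a::complex_inner) z"
  by (simp only: cinner_commute[of x "y + z"] cinner_commute[of x y] cinner_commute[of x z]
      cinner_add_left complex_cnj_add)

lemma cinner_scaleC_right: "cinner x (scaleC r y) = cnj r * cinner (x::'a::complex_inner) y"
  by (simp only: cinner_commute[of x "scaleC r y"] cinner_commute[of x y] cinner_scaleC_left complex_cnj_mult)

lemma cinner_zero_left[simp]: "cinner 0 (y::'a::complex_inner) = 0"
  using cinner_add_left[of "0::'a" 0 y] by simp

lemma cinner_zero_right[simp]: "cinner (x::'a::complex_inner) 0 = 0"
  by (simp only: cinner_commute[of x 0] cinner_zero_left complex_cnj_zero)

lemma cinner_minus_left: "cinner (- x) (y::'a::complex_inner) = - cinner x y"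
proof -
  have "cinner x y + cinner (- x) y = 0" using cinner_add_left[of x "-x" y] by simp
  then show ?thesis by (rule minus_unique[symmetric])
qed

lemma cinner_minus_right: "cinner x (- y::'a::complex_inner) = - cinner x y"
  by (simp only: cinner_commute[of x "- y"] cinner_commute[of x y] cinner_minus_left complex_cnj_minus)

lemma cinner_diff_left: "cinner (x - z) (y::'a::complex_inner) = cinner x y - cinner z y"
  by (simp only: diff_conv_add_uminus cinner_add_left cinner_minus_left)

lemma cinner_diff_right: "cinner x (y - z::'a::complex_inner) = cinner x y - cinner x z"
  by (simp only: diff_conv_add_uminus cinner_add_right cinner_minus_right)

lemma cinner_self: "cinner x (x::'a::complex_inner) = complex_of_real ((norm x)\<^sup>2)"
  using cinner_self_real[of x] cinner_self_nonneg[of x] norm_eq_sqrt_cinner[of x]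
  by (simp add: complex_eq_iff)

lemma scaleC_zero_left[simp]: "scaleC 0 (x::'a::complex_vector) = 0"
  using scaleR_scaleC[of 0 x] by simp

lemma scaleC_minus1: "scaleC (-1) (x::'a::complex_vector) = - x"
  using scaleR_scaleC[of "-1" x] by simp

lemma scaleC_zero_right[simp]: "scaleC c (0::'a::complex_vector) = 0"
  using scaleC_add_right[of c "0::'a" 0] by simp

lemma scaleC_minus_right: "scaleC c (- x::'a::complex_vector) = - scaleC c x"
proof -
  have "scaleC c x + scaleC c (- x) = 0" using scaleC_add_right[of c x "-x"] by simp
  then show ?thesis by (rule minus_unique[symmetric])
qed

lemma scaleC_diff_right: "scaleC c (x - y::'a::complex_vector) = scaleC c x - scaleC c y"
  by (simp only: diff_conv_add_uminus scaleC_add_right scaleC_minus_right)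

lemma mcn: "z * cnj z = complex_of_real ((cmod z)\<^sup>2)"
  by (rule complex_norm_square[symmetric])

lemma norm_scaleC: "norm (scaleC c x) = cmod c * norm (x::'a::complex_inner)"
proof -
  have 1: "cinner (scaleC c x) (scaleC c x) = (c * cnj c) * cinner x x"
    by (simp add: cinner_scaleC_left cinner_scaleC_right mult.assoc)
  then have "complex_of_real ((norm (scaleC c x))\<^sup>2) = complex_of_real ((cmod c * norm x)\<^sup>2)"
    by (simp only: cinner_self mcn of_real_mult[symmetric] power_mult_distrib)
  then have "(norm (scaleC c x))\<^sup>2 = (cmod c * norm x)\<^sup>2" using of_real_eq_iff by blast
  then show ?thesis by (simp add: power2_eq_iff_nonneg)
qed

lemma cinner_self_Re: "Re (cinner x x) = (norm (x::'a::complex_inner))\<^sup>2"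
  by (simp add: cinner_self)

lemma norm_add_sq: "(norm (x + y))\<^sup>2 = (norm x)\<^sup>2 + (norm y)\<^sup>2 + 2 * Re (cinner x (y::'a::complex_inner))"
proof -
  have e: "cinner (x + y) (x + y) = cinner x x + cinner y y + (cinner x y + cnj (cinner x y))"
    by (simp only: cinner_add_left cinner_add_right cinner_commute[of y x] add_ac)
  have "(norm (x + y))\<^sup>2 = Re (cinner (x + y) (x + y))" by (rule cinner_self_Re[symmetric])
  also have "\<dots> = Re (cinner x x) + Re (cinner y y) + 2 * Re (cinner x y)"
    unfolding e by simp
  also have "\<dots> = (norm x)\<^sup>2 + (norm y)\<^sup>2 + 2 * Re (cinner x y)"
    unfolding cinner_self_Re ..
  finally show ?thesis .
qed

lemma cauchy_schwarz: "cmod (cinner x y) \<le> norm x * norm (y::'a::complex_inner)"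
proof (cases "y = 0")
  case True then show ?thesis by simp
next
  case False
  define t where "t = cinner x y / cinner y y"
  have yy: "cinner y y = complex_of_real ((norm y)\<^sup>2)" by (rule cinner_self)
  have ny: "norm y > 0" using False by simp
  have "cinner (x - scaleC t y) (x - scaleC t y) = cinner x x - cnj t * cinner x y - t * cinner y x + t * cnj t * cinner y y"
    by (simp only: cinner_diff_left cinner_diff_right cinner_scaleC_left cinner_scaleC_right) (simp add: algebra_simps)
  also have "\<dots> = cinner x x - cinner x y * cnj (cinner x y) / cinner y y"
  proof -
    have yy0: "cinner y y \<noteq> 0" using ny yy by simp
    have cy: "cinner y x = cnj (cinner x y)" by (rule cinner_commute)
    have ct: "cnj t = cnj (cinner x y) / cinner y y"
      unfolding t_def yy by simp
    show ?thesis unfolding ct cy unfolding t_def using yy0 by (simp add: field_simps)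
  qed
  also have "\<dots> = complex_of_real ((norm x)\<^sup>2 - (cmod (cinner x y))\<^sup>2 / (norm y)\<^sup>2)"
    by (simp only: mcn yy cinner_self of_real_divide[symmetric] of_real_diff[symmetric])
  finally have "Re (cinner (x - scaleC t y) (x - scaleC t y)) = Re (complex_of_real ((norm x)\<^sup>2 - (cmod (cinner x y))\<^sup>2 / (norm y)\<^sup>2))"
    by (rule arg_cong)
  then have "(norm (x - scaleC t y))\<^sup>2 = (norm x)\<^sup>2 - (cmod (cinner x y))\<^sup>2 / (norm y)\<^sup>2"
    unfolding cinner_self_Re Re_complex_of_real .
  then have "(cmod (cinner x y))\<^sup>2 / (norm y)\<^sup>2 \<le> (norm x)\<^sup>2"
    using zero_le_power2[of "norm (x - scaleC t y)"] by linarith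
  then have "(cmod (cinner x y))\<^sup>2 \<le> (norm x)\<^sup>2 * (norm y)\<^sup>2"
    using ny by (simp add: pos_divide_le_eq)
  then have "(cmod (cinner x y))\<^sup>2 \<le> (norm x * norm y)\<^sup>2"
    by (simp only: power_mult_distrib)
  then show ?thesis by (simp add: power2_le_iff_abs_le)
qed

lemma polarization_zero:
  fixes D :: "'a::complex_vector \<Rightarrow> 'a \<Rightarrow> complex"
  assumes addL: "\<And>x y z. D (x + y) z = D x z + D y z"
    and addR: "\<And>x y z. D x (y + z) = D x y + D x z"
    and scL: "\<And>c x y. D (scaleC c x) y = c * D x y"
    and scR: "\<And>c x y. D x (scaleC c y) = cnj c * D x y"
    and diag: "\<And>x. D x x = 0"
  shows "D x y = 0"
proof -
  have "D (x + y) (x + y) = D x x + D x y + (D y x + D y y)" by (simp only: addL addR add_ac)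
  then have 1: "D x y + D y x = 0" by (simp only: diag) simp
  have "D (x + scaleC \<i> y) (x + scaleC \<i> y) = D x x + cnj \<i> * D x y + (\<i> * D y x + \<i> * (cnj \<i> * D y y))"
    by (simp only: addL addR scL scR) (simp add: algebra_simps)
  then have 2: "- \<i> * D x y + \<i> * D y x = 0" by (simp only: diag) simp
  have 3: "D y x = - D x y" using 1 by (rule minus_unique[symmetric])
  have "2 * \<i> * D x y = 0" using 2 unfolding 3 by (simp add: algebra_simps)
  then show ?thesis by simp
qed

lemma clinear_add: "clinear f \<Longrightarrow> f (x + y) = f x + f y"
  by (simp add: clinear_def)
lemma clinear_scaleC: "clinear f \<Longrightarrow> f (scaleC c x) = scaleC c (f x)"
  by (simp add: clinear_def)
lemma clinear_zero: "clinear f \<Longrightarrow> f 0 = 0"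
  using clinear_scaleC[of f 0 0] by simp
lemma clinear_minus: "clinear f \<Longrightarrow> f (- x) = - f x"
  using clinear_scaleC[of f "-1" x] by (simp add: scaleC_minus1)
lemma clinear_diff: "clinear f \<Longrightarrow> f (x - y) = f x - f y"
  by (simp only: diff_conv_add_uminus clinear_add clinear_minus)

lemma bounded_clinear_pos:
  assumes "bounded_clinear f"
  shows "\<exists>K\<ge>0. \<forall>x. norm (f x) \<le> norm x * K"
proof -
  obtain K where K: "\<forall>x. norm (f x) \<le> norm x * K" using assms bounded_clinear_def by blast
  have "\<forall>x. norm (f x) \<le> norm x * max K 0"
    by (metis K max.cobounded1 mult_left_mono norm_ge_zero order_trans)
  then show ?thesis by (metis max.cobounded2)
qed

lemma norm_diff_sq: "(norm (x - y))\<^sup>2 = (norm x)\<^sup>2 + (norm y)\<^sup>2 - 2 * Re (cinner x (y::'a::complex_inner))"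
  using norm_add_sq[of x "- y"] by (simp add: cinner_minus_right)

lemma parallelogram: "(norm (x - y))\<^sup>2 = 2 * (norm x)\<^sup>2 + 2 * (norm y)\<^sup>2 - (norm (x + (y::'a::complex_inner)))\<^sup>2"
  using norm_add_sq[of x y] norm_diff_sq[of x y] by simp

lemma riesz:
  fixes \<phi> :: "'a::chilbert_space \<Rightarrow> complex"
  assumes add: "\<And>x y. \<phi> (x + y) = \<phi> x + \<phi> y"
    and sc: "\<And>c x. \<phi> (scaleC c x) = c * \<phi> x"
    and bnd: "\<And>x. cmod (\<phi> x) \<le> C * norm x"
  shows "\<exists>z. \<forall>x. \<phi> x = cinner x z"
proof (cases "\<forall>x. \<phi> x = 0")
  case True then show ?thesis by (intro exI[of _ 0]) simp
next
  case False
  then obtain x0 where x0: "\<phi> x0 \<noteq> 0" by blast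
  have phi0: "\<phi> 0 = 0" using sc[of 0 0] by simp
  have phidiff: "\<phi> (x - y) = \<phi> x - \<phi> y" for x y
    using add[of "x - y" y] by simp
  define S where "S = {x. \<phi> x = 1}"
  have x1: "scaleC (1 / \<phi> x0) x0 \<in> S" using x0 by (simp add: S_def sc)
  define d where "d = Inf (norm ` S)"
  have bdd: "bdd_below (norm ` S)" by (rule bdd_belowI[of _ 0]) auto
  have dle: "d \<le> norm w" if "w \<in> S" for w
    unfolding d_def using bdd that by (simp add: cInf_lower)
  have d0: "0 \<le> d" unfolding d_def using x1 by (intro cInf_greatest) auto
  have "\<forall>n. \<exists>x\<in>S. norm x < d + inverse (real (Suc n))"
  proof
    fix n
    have "Inf (norm ` S) < d + inverse (real (Suc n))" unfolding d_def by simp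
    then obtain r where "r \<in> norm ` S" "r < d + inverse (real (Suc n))"
      using cInf_lessD[of "norm ` S"] x1 by blast
    then show "\<exists>x\<in>S. norm x < d + inverse (real (Suc n))" by blast
  qed
  then obtain xs where xsS: "\<And>n. xs n \<in> S" and xsn: "\<And>n. norm (xs n) < d + inverse (real (Suc n))"
    by metis
  have mid: "4 * d\<^sup>2 \<le> (norm (a + b))\<^sup>2" if "a \<in> S" "b \<in> S" for a b
  proof -
    have "scaleC (1/2) (a + b) \<in> S" using that by (simp add: S_def sc add)
    then have "d \<le> norm (scaleC (1/2) (a + b))" by (rule dle)
    then have "2 * d \<le> norm (a + b)" by (simp add: norm_scaleC)
    then have "(2 * d)\<^sup>2 \<le> (norm (a + b))\<^sup>2" using d0 by (intro power_mono) auto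
    then show ?thesis by (simp add: power_mult_distrib)
  qed
  have sqb: "(norm (xs n))\<^sup>2 \<le> d\<^sup>2 + (2 * d + 1) * inverse (real (Suc n))" for n
  proof -
    define e where "e = inverse (real (Suc n))"
    have e0: "0 < e" "e \<le> 1" unfolding e_def by (auto simp: field_simps)
    have "(norm (xs n))\<^sup>2 \<le> (d + e)\<^sup>2"
      using xsn[of n] unfolding e_def[symmetric] by (intro power_mono) auto
    also have "\<dots> = d\<^sup>2 + (2 * d + e) * e" by (simp add: power2_eq_square algebra_simps)
    also have "\<dots> \<le> d\<^sup>2 + (2 * d + 1) * e" using e0 d0 by (intro add_left_mono mult_right_mono) auto
    finally show ?thesis unfolding e_def .
  qed
  have diffb: "(norm (xs m - xs n))\<^sup>2 \<le> 2 * (2 * d + 1) * (inverse (real (Suc m)) + inverse (real (Suc n)))" for m n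
    using parallelogram[of "xs m" "xs n"] mid[OF xsS xsS, of m n] sqb[of m] sqb[of n]
    by (simp add: algebra_simps)
  have "Cauchy xs"
  proof (rule CauchyI)
    fix e :: real assume e: "0 < e"
    obtain N where N: "inverse (real (Suc N)) < e\<^sup>2 / (4 * (2 * d + 1))"
      using reals_Archimedean[of "e\<^sup>2 / (4 * (2 * d + 1))"] e d0 by auto
    show "\<exists>M. \<forall>m\<ge>M. \<forall>n\<ge>M. norm (xs m - xs n) < e"
    proof (intro exI allI impI)
      fix m n assume mn: "N \<le> m" "N \<le> n"
      have im: "inverse (real (Suc m)) \<le> inverse (real (Suc N))"
        using mn by (simp add: field_simps)
      have iN: "inverse (real (Suc n)) \<le> inverse (real (Suc N))"
        using mn by (simp add: field_simps)
      have "(norm (xs m - xs n))\<^sup>2 \<le> 2 * (2 * d + 1) * (inverse (real (Suc m)) + inverse (real (Suc n)))"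
        by (rule diffb)
      also have "\<dots> \<le> 2 * (2 * d + 1) * (2 * inverse (real (Suc N)))"
      proof (rule mult_left_mono)
        show "inverse (real (Suc m)) + inverse (real (Suc n)) \<le> 2 * inverse (real (Suc N))"
          using im iN by linarith
        show "0 \<le> 2 * (2 * d + 1)" using d0 by simp
      qed
      also have "\<dots> < 2 * (2 * d + 1) * (2 * (e\<^sup>2 / (4 * (2 * d + 1))))"
        using N d0 by (intro mult_strict_left_mono) auto
      also have "\<dots> = e\<^sup>2" using d0 by (simp add: field_simps)
      finally show "norm (xs m - xs n) < e" using e by (simp add: power_less_imp_less_base)
    qed
  qed
  then obtain u where u: "xs \<longlonglongrightarrow> u" using Cauchy_convergent convergent_def by blast
  have "(\<lambda>n. \<phi> (xs n) - \<phi> u) \<longlonglongrightarrow> 0"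
  proof (rule Lim_null_comparison)
    show "\<forall>\<^sub>F n in sequentially. norm (\<phi> (xs n) - \<phi> u) \<le> C * norm (xs n - u)"
      using bnd by (simp add: phidiff[symmetric])
    have "(\<lambda>n. xs n - u) \<longlonglongrightarrow> 0" using u by (rule LIM_zero)
    then have "(\<lambda>n. norm (xs n - u)) \<longlonglongrightarrow> 0" by (rule tendsto_norm_zero)
    then show "(\<lambda>n. C * norm (xs n - u)) \<longlonglongrightarrow> 0" using tendsto_mult_right_zero by blast
  qed
  then have "(\<lambda>n. \<phi> (xs n)) \<longlonglongrightarrow> \<phi> u" by (rule LIM_zero_cancel)
  moreover have "(\<lambda>n. \<phi> (xs n)) = (\<lambda>n. 1)" using xsS by (simp add: S_def)
  ultimately have "(\<lambda>n. 1) \<longlonglongrightarrow> \<phi> u" by simp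
  then have phiu: "\<phi> u = 1" using LIMSEQ_unique[OF tendsto_const] by metis
  have unorm: "norm u \<le> norm w" if "w \<in> S" for w
  proof -
    have "norm u \<le> d"
    proof (rule LIMSEQ_le)
      show "(\<lambda>n. norm (xs n)) \<longlonglongrightarrow> norm u" using u by (rule tendsto_norm)
      show "(\<lambda>n. d + inverse (real (Suc n))) \<longlonglongrightarrow> d"
        using tendsto_add[OF tendsto_const LIMSEQ_inverse_real_of_nat, of d] by simp
      show "\<exists>N. \<forall>n\<ge>N. norm (xs n) \<le> d + inverse (real (Suc n))"
        using xsn less_imp_le by blast
    qed
    then show ?thesis using dle[OF that] by simp
  qed
  have ortho: "cinner n u = 0" if n: "\<phi> n = 0" for n
  proof -
    define c where "c = cinner u n"
    define s where "s = 1 / ((norm n)\<^sup>2 + 1)"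
    have nn0: "0 \<le> (norm n)\<^sup>2" by simp
    then have np: "0 < (norm n)\<^sup>2 + 1" by linarith
    have s0: "0 < s" unfolding s_def using np by simp
    have sn: "s * (norm n)\<^sup>2 < 1" unfolding s_def using np by (simp add: field_simps)
    define t where "t = - (complex_of_real s * c)"
    have "u + scaleC t n \<in> S" using phiu n by (simp add: S_def add sc)
    then have "(norm u)\<^sup>2 \<le> (norm (u + scaleC t n))\<^sup>2"
      using unorm by (simp add: power_mono)
    also have "\<dots> = (norm u)\<^sup>2 + (cmod t * norm n)\<^sup>2 + 2 * Re (cnj t * c)"
      by (simp add: norm_add_sq norm_scaleC cinner_scaleC_right c_def)
    also have "\<dots> = (norm u)\<^sup>2 + s\<^sup>2 * (cmod c)\<^sup>2 * (norm n)\<^sup>2 - 2 * s * (cmod c)\<^sup>2"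
    proof -
      have "cnj t * c = - (complex_of_real (s * (cmod c)\<^sup>2))"
      proof -
        have "cnj t * c = - (complex_of_real s * (c * cnj c))" unfolding t_def by (simp add: algebra_simps)
        then show ?thesis by (simp only: mcn of_real_mult)
      qed
      moreover have "cmod t = s * cmod c" unfolding t_def using s0 by (simp add: norm_mult)
      ultimately show ?thesis by (simp add: power_mult_distrib)
    qed
    finally have "0 \<le> s * ((cmod c)\<^sup>2 * (s * (norm n)\<^sup>2 - 2))"
      by (simp add: algebra_simps power2_eq_square)
    then have "0 \<le> (cmod c)\<^sup>2 * (s * (norm n)\<^sup>2 - 2)"
      using s0 by (simp add: zero_le_mult_iff)
    moreover have "s * (norm n)\<^sup>2 - 2 < 0" using sn by simp
    ultimately have "(cmod c)\<^sup>2 \<le> 0" unfolding zero_le_mult_iff by linarith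
    then have "c = 0" by simp
    then show ?thesis unfolding c_def by (simp only: cinner_commute[of n u] complex_cnj_zero)
  qed
  have "u \<noteq> 0" using phiu phi0 by auto
  then have nu: "(norm u)\<^sup>2 \<noteq> 0" by simp
  have key: "cinner x u = \<phi> x * complex_of_real ((norm u)\<^sup>2)" for x
  proof -
    have "\<phi> (x - scaleC (\<phi> x) u) = 0" using phiu by (simp add: phidiff sc)
    then have "cinner (x - scaleC (\<phi> x) u) u = 0" by (rule ortho)
    then show ?thesis by (simp add: cinner_diff_left cinner_scaleC_left cinner_self)
  qed
  show ?thesis
  proof (intro exI allI)
    fix x
    show "\<phi> x = cinner x (scaleC (complex_of_real (1 / (norm u)\<^sup>2)) u)"
      using nu by (simp add: cinner_scaleC_right key)
  qed
qed

lemma cadjoint_prop: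
  fixes L :: "'a::chilbert_space \<Rightarrow> 'b::complex_inner"
  assumes L: "bounded_clinear L"
  shows "cinner (L x) y = cinner x (cadjoint L y)"
proof -
  have lin: "clinear L" using L bounded_clinear_def by blast
  obtain K where K: "K \<ge> 0" "\<And>x. norm (L x) \<le> norm x * K" using bounded_clinear_pos[OF L] by blast
  have "\<forall>y. \<exists>z. \<forall>x. cinner (L x) y = cinner x z"
  proof
    fix y
    show "\<exists>z. \<forall>x. cinner (L x) y = cinner x z"
    proof (rule riesz[where C = "K * norm y"])
      show "cinner (L (x + x')) y = cinner (L x) y + cinner (L x') y" for x x'
        by (simp add: clinear_add[OF lin] cinner_add_left)
      show "cinner (L (scaleC c x)) y = c * cinner (L x) y" for c x
        by (simp add: clinear_scaleC[OF lin] cinner_scaleC_left)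
      show "cmod (cinner (L x) y) \<le> K * norm y * norm x" for x
      proof -
        have "cmod (cinner (L x) y) \<le> norm (L x) * norm y" by (rule cauchy_schwarz)
        also have "\<dots> \<le> norm x * K * norm y" using K by (intro mult_right_mono) auto
        finally show ?thesis by (simp add: algebra_simps)
      qed
    qed
  qed
  then obtain A where A: "\<forall>x y. cinner (L x) y = cinner x (A y)" by metis
  have uniq: "B = A" if B: "\<forall>x y. cinner (L x) y = cinner x (B y)" for B
  proof
    fix y
    have "cinner (B y - A y) (B y - A y) = 0"
      using A B by (simp add: cinner_diff_right)
    then show "B y = A y" by (simp add: cinner_eq_zero_iff)
  qed
  have "\<exists>!A. \<forall>x y. cinner (L x) y = cinner x (A y)" using A uniq by blast
  then have "\<forall>x y. cinner (L x) y = cinner x (cadjoint L y)"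
    unfolding cadjoint_def by (rule theI')
  then show ?thesis by blast
qed

lemma sm_compose2:
  fixes F G :: "'w \<Rightarrow> 'k::complex_inner" and h :: "'k \<Rightarrow> 'k \<Rightarrow> 'b::metric_space"
  assumes F: "strongly_measurable M F" and G: "strongly_measurable M G"
    and cont: "\<And>xs ys x y. xs \<longlonglongrightarrow> x \<Longrightarrow> ys \<longlonglongrightarrow> y \<Longrightarrow> (\<lambda>i. h (xs i) (ys i)) \<longlonglongrightarrow> h x y"
  shows "\<exists>s::nat \<Rightarrow> 'w \<Rightarrow> 'b. (\<forall>i. s i \<in> measurable M borel \<and> finite (range (s i)))
        \<and> (\<forall>\<omega>\<in>space M. (\<lambda>i. s i \<omega>) \<longlonglongrightarrow> h (F \<omega>) (G \<omega>))"
proof -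
  obtain s where s: "\<And>i. s i \<in> measurable M borel" "\<And>i. finite (range (s i))"
    "\<And>\<omega>. \<omega> \<in> space M \<Longrightarrow> (\<lambda>i. s i \<omega>) \<longlonglongrightarrow> F \<omega>"
    using F unfolding strongly_measurable_def by blast
  obtain t where t: "\<And>i. t i \<in> measurable M borel" "\<And>i. finite (range (t i))"
    "\<And>\<omega>. \<omega> \<in> space M \<Longrightarrow> (\<lambda>i. t i \<omega>) \<longlonglongrightarrow> G \<omega>"
    using G unfolding strongly_measurable_def by blast
  show ?thesis
  proof (intro exI[of _ "\<lambda>i \<omega>. h (s i \<omega>) (t i \<omega>)"] conjI allI ballI)
    fix i
    have "simple_function M (s i)"
      using s(1,2)[of i] by (intro simple_function_borel_measurable) (auto intro: finite_subset[OF image_mono[OF subset_UNIV]])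
    moreover have "simple_function M (t i)"
      using t(1,2)[of i] by (intro simple_function_borel_measurable) (auto intro: finite_subset[OF image_mono[OF subset_UNIV]])
    ultimately have "simple_function M (\<lambda>\<omega>. h (s i \<omega>) (t i \<omega>))"
      by (rule simple_function_compose2)
    then show "(\<lambda>\<omega>. h (s i \<omega>) (t i \<omega>)) \<in> borel_measurable M"
      by (rule borel_measurable_simple_function)
    have "range (\<lambda>\<omega>. h (s i \<omega>) (t i \<omega>)) \<subseteq> (\<lambda>(a, b). h a b) ` (range (s i) \<times> range (t i))"
      by auto
    then show "finite (range (\<lambda>\<omega>. h (s i \<omega>) (t i \<omega>)))"
      using s(2) t(2) by (meson finite_SigmaI finite_imageI finite_subset)
  next
    fix \<omega> assume "\<omega> \<in> space M"
    then show "(\<lambda>i. h (s i \<omega>) (t i \<omega>)) \<longlonglongrightarrow> h (F \<omega>) (G \<omega>)"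
      using s(3) t(3) cont by blast
  qed
qed

lemma sm_borel:
  fixes F :: "'w \<Rightarrow> 'k::complex_inner"
  assumes "strongly_measurable M F"
  shows "F \<in> borel_measurable M"
proof -
  obtain s where s: "\<And>i. s i \<in> measurable M borel"
    "\<And>\<omega>. \<omega> \<in> space M \<Longrightarrow> (\<lambda>i. s i \<omega>) \<longlonglongrightarrow> F \<omega>"
    using assms unfolding strongly_measurable_def by blast
  show ?thesis by (rule borel_measurable_LIMSEQ_metric[OF s])
qed

lemma sm_compose2_borel:
  fixes F G :: "'w \<Rightarrow> 'k::complex_inner" and h :: "'k \<Rightarrow> 'k \<Rightarrow> 'b::metric_space"
  assumes F: "strongly_measurable M F" and G: "strongly_measurable M G"
    and cont: "\<And>xs ys x y. xs \<longlonglongrightarrow> x \<Longrightarrow> ys \<longlonglongrightarrow> y \<Longrightarrow> (\<lambda>i. h (xs i) (ys i)) \<longlonglongrightarrow> h x y"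
  shows "(\<lambda>\<omega>. h (F \<omega>) (G \<omega>)) \<in> borel_measurable M"
proof -
  obtain s where s: "\<And>i. s i \<in> measurable M borel"
    "\<And>\<omega>. \<omega> \<in> space M \<Longrightarrow> (\<lambda>i. s i \<omega>) \<longlonglongrightarrow> h (F \<omega>) (G \<omega>)"
    using sm_compose2[where h=h, OF F G cont] by blast
  show ?thesis by (rule borel_measurable_LIMSEQ_metric[OF s])
qed

lemma sm_add:
  fixes F G :: "'w \<Rightarrow> 'k::complex_inner"
  assumes F: "strongly_measurable M F" and G: "strongly_measurable M G"
    and H: "\<forall>\<omega>\<in>space M. H \<omega> = F \<omega> + G \<omega>"
  shows "strongly_measurable M H"
proof -
  obtain s where s: "\<forall>i. s i \<in> borel_measurable M \<and> finite (range (s i))"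
     "\<forall>\<omega>\<in>space M. (\<lambda>i. s i \<omega>) \<longlonglongrightarrow> F \<omega> + G \<omega>"
    using sm_compose2[where h="(+)", OF F G tendsto_add] by blast
  show ?thesis unfolding strongly_measurable_def using s H by (intro exI[of _ s]) auto
qed

interpretation cinner_bb: bounded_bilinear "cinner :: 'a::complex_inner \<Rightarrow> 'a \<Rightarrow> complex"
proof
  fix a a' b b' :: 'a and r :: real
  show "cinner (a + a') b = cinner a b + cinner a' b" by (rule cinner_add_left)
  show "cinner a (b + b') = cinner a b + cinner a b'" by (rule cinner_add_right)
  show "cinner (scaleR r a) b = scaleR r (cinner a b)"
    by (simp add: scaleR_scaleC cinner_scaleC_left scaleR_conv_of_real)
  show "cinner a (scaleR r b) = scaleR r (cinner a b)"
    by (simp add: scaleR_scaleC cinner_scaleC_right scaleR_conv_of_real)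
  show "\<exists>K. \<forall>a b::'a. norm (cinner a b) \<le> norm a * norm b * K"
    using cauchy_schwarz by (intro exI[of _ 1]) auto
qed

lemma parseval_parts:
  assumes "parseval_cont_g_frame M K \<Lambda>"
  shows "\<forall>\<omega>\<in>space M. bounded_clinear (\<Lambda> \<omega>) \<and> range (\<Lambda> \<omega>) \<subseteq> K \<omega>"
    "strongly_measurable M (\<lambda>\<omega>. \<Lambda> \<omega> f)"
    "(\<integral>\<^sup>+\<omega>. ennreal ((norm (\<Lambda> \<omega> f))\<^sup>2) \<partial>M) = ennreal ((norm f)\<^sup>2)"
  using assms unfolding parseval_cont_g_frame_def cont_g_frame_def g_family_def by auto

lemma sq_integrable:
  fixes \<Lambda> :: "'w \<Rightarrow> 'h::complex_inner \<Rightarrow> 'k::complex_inner"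
  assumes "parseval_cont_g_frame M K \<Lambda>"
  shows "integrable M (\<lambda>\<omega>. (norm (\<Lambda> \<omega> f))\<^sup>2)"
    "integral\<^sup>L M (\<lambda>\<omega>. (norm (\<Lambda> \<omega> f))\<^sup>2) = (norm f)\<^sup>2"
proof -
  have m: "(\<lambda>\<omega>. \<Lambda> \<omega> f) \<in> borel_measurable M"
    using sm_borel parseval_parts(2)[OF assms] by blast
  have "(\<lambda>\<omega>. (norm (\<Lambda> \<omega> f))\<^sup>2) \<in> borel_measurable M" using m by measurable
  then have "integrable M (\<lambda>\<omega>. (norm (\<Lambda> \<omega> f))\<^sup>2) \<and> integral\<^sup>L M (\<lambda>\<omega>. (norm (\<Lambda> \<omega> f))\<^sup>2) = (norm f)\<^sup>2"
    using nn_integral_eq_integrable[of "\<lambda>\<omega>. (norm (\<Lambda> \<omega> f))\<^sup>2" M "(norm f)\<^sup>2"]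
      parseval_parts(3)[OF assms, of f] by simp
  then show "integrable M (\<lambda>\<omega>. (norm (\<Lambda> \<omega> f))\<^sup>2)"
    "integral\<^sup>L M (\<lambda>\<omega>. (norm (\<Lambda> \<omega> f))\<^sup>2) = (norm f)\<^sup>2" by auto
qed

lemma integral_identity:
  fixes \<Lambda> \<Theta> :: "'w \<Rightarrow> 'h::complex_inner \<Rightarrow> 'k::complex_inner"
  assumes \<Lambda>: "parseval_cont_g_frame M K \<Lambda>"
    and \<Theta>: "parseval_cont_g_frame M K \<Theta>"
    and disj: "strongly_disjoint M \<Lambda> \<Theta>"
    and \<Gamma>: "\<forall>\<omega>\<in>space M. \<forall>f. \<Gamma> \<omega> f = \<Lambda> \<omega> (L1 f) + \<Theta> \<omega> (L2 f)"
  shows "(\<integral>\<^sup>+\<omega>. ennreal ((norm (\<Gamma> \<omega> f))\<^sup>2) \<partial>M) = ennreal ((norm (L1 f))\<^sup>2 + (norm (L2 f))\<^sup>2)"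
proof -
  define a where "a = (\<lambda>\<omega>. \<Lambda> \<omega> (L1 f))"
  define b where "b = (\<lambda>\<omega>. \<Theta> \<omega> (L2 f))"
  have sma: "strongly_measurable M a" unfolding a_def by (rule parseval_parts(2)[OF \<Lambda>])
  have smb: "strongly_measurable M b" unfolding b_def by (rule parseval_parts(2)[OF \<Theta>])
  have ia: "integrable M (\<lambda>\<omega>. (norm (a \<omega>))\<^sup>2)" "integral\<^sup>L M (\<lambda>\<omega>. (norm (a \<omega>))\<^sup>2) = (norm (L1 f))\<^sup>2"
    unfolding a_def using sq_integrable[OF \<Lambda>] by auto
  have ib: "integrable M (\<lambda>\<omega>. (norm (b \<omega>))\<^sup>2)" "integral\<^sup>L M (\<lambda>\<omega>. (norm (b \<omega>))\<^sup>2) = (norm (L2 f))\<^sup>2"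
    unfolding b_def using sq_integrable[OF \<Theta>] by auto
  have cm: "(\<lambda>\<omega>. cinner (a \<omega>) (b \<omega>)) \<in> borel_measurable M"
    by (rule sm_compose2_borel[OF sma smb]) (rule cinner_bb.tendsto)
  have ci: "integrable M (\<lambda>\<omega>. cinner (a \<omega>) (b \<omega>))"
  proof (rule Bochner_Integration.integrable_bound[where f="\<lambda>\<omega>. (norm (a \<omega>))\<^sup>2 + (norm (b \<omega>))\<^sup>2"])
    show "integrable M (\<lambda>\<omega>. (norm (a \<omega>))\<^sup>2 + (norm (b \<omega>))\<^sup>2)" using ia ib by auto
    show "(\<lambda>\<omega>. cinner (a \<omega>) (b \<omega>)) \<in> borel_measurable M" by (rule cm)
    show "AE \<omega> in M. norm (cinner (a \<omega>) (b \<omega>)) \<le> norm ((norm (a \<omega>))\<^sup>2 + (norm (b \<omega>))\<^sup>2)"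
    proof (rule AE_I2)
      fix \<omega>
      have "norm (cinner (a \<omega>) (b \<omega>)) \<le> norm (a \<omega>) * norm (b \<omega>)" by (rule cauchy_schwarz)
      also have "\<dots> \<le> 2 * norm (a \<omega>) * norm (b \<omega>)" by simp
      also have "\<dots> \<le> (norm (a \<omega>))\<^sup>2 + (norm (b \<omega>))\<^sup>2" by (rule sum_squares_bound)
      finally show "norm (cinner (a \<omega>) (b \<omega>)) \<le> norm ((norm (a \<omega>))\<^sup>2 + (norm (b \<omega>))\<^sup>2)" by simp
    qed
  qed
  have c0: "integral\<^sup>L M (\<lambda>\<omega>. cinner (a \<omega>) (b \<omega>)) = 0"
    using disj unfolding strongly_disjoint_def l2_inner_def analysis_op_def a_def b_def by auto
  have cr: "integral\<^sup>L M (\<lambda>\<omega>. Re (cinner (a \<omega>) (b \<omega>))) = 0"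
    using integral_bounded_linear[OF bounded_linear_Re ci] c0 by simp
  have ir: "integrable M (\<lambda>\<omega>. Re (cinner (a \<omega>) (b \<omega>)))"
    using ci by (rule integrable_bounded_linear[OF bounded_linear_Re])
  define g where "g = (\<lambda>\<omega>. (norm (a \<omega>))\<^sup>2 + (norm (b \<omega>))\<^sup>2 + 2 * Re (cinner (a \<omega>) (b \<omega>)))"
  have ig: "integrable M g" unfolding g_def using ia ib ir by auto
  have intg: "integral\<^sup>L M g = (norm (L1 f))\<^sup>2 + (norm (L2 f))\<^sup>2"
    unfolding g_def using ia ib ir cr by (simp add: integral_add)
  have pt: "(norm (\<Gamma> \<omega> f))\<^sup>2 = g \<omega>" if "\<omega> \<in> space M" for \<omega>
    using \<Gamma> that unfolding g_def a_def b_def by (simp add: norm_add_sq)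
  have "(\<integral>\<^sup>+\<omega>. ennreal ((norm (\<Gamma> \<omega> f))\<^sup>2) \<partial>M) = (\<integral>\<^sup>+\<omega>. ennreal (g \<omega>) \<partial>M)"
    using pt by (intro nn_integral_cong) simp
  also have "\<dots> = ennreal (integral\<^sup>L M g)"
    using ig pt by (intro nn_integral_eq_integral) (auto intro!: AE_I2 simp flip: pt)
  finally show ?thesis using intg by simp
qed

lemma key:
  fixes \<Lambda> \<Theta> :: "'w \<Rightarrow> 'h::complex_inner \<Rightarrow> 'k::complex_inner" and L1 L2 :: "'h \<Rightarrow> 'h"
  assumes K: "\<forall>\<omega>\<in>space M. closed_csubspace (K \<omega>)"
    and \<Lambda>: "parseval_cont_g_frame M K \<Lambda>"
    and \<Theta>: "parseval_cont_g_frame M K \<Theta>"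
    and disj: "strongly_disjoint M \<Lambda> \<Theta>"
    and L1: "bounded_clinear L1" and L2: "bounded_clinear L2"
    and \<Gamma>: "\<forall>\<omega>\<in>space M. \<forall>f. \<Gamma> \<omega> f = \<Lambda> \<omega> (L1 f) + \<Theta> \<omega> (L2 f)"
  shows "parseval_cont_g_frame M K \<Gamma> \<longleftrightarrow> (\<forall>f. (norm (L1 f))\<^sup>2 + (norm (L2 f))\<^sup>2 = (norm f)\<^sup>2)"
proof
  assume "parseval_cont_g_frame M K \<Gamma>"
  then show "\<forall>f. (norm (L1 f))\<^sup>2 + (norm (L2 f))\<^sup>2 = (norm f)\<^sup>2"
    using parseval_parts(3) integral_identity[OF \<Lambda> \<Theta> disj \<Gamma>]
    by (metis add_nonneg_nonneg ennreal_inj zero_le_power2)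
next
  assume id: "\<forall>f. (norm (L1 f))\<^sup>2 + (norm (L2 f))\<^sup>2 = (norm f)\<^sup>2"
  have int: "(\<integral>\<^sup>+\<omega>. ennreal ((norm (\<Gamma> \<omega> f))\<^sup>2) \<partial>M) = ennreal ((norm f)\<^sup>2)" for f
    using integral_identity[OF \<Lambda> \<Theta> disj \<Gamma>] id by simp
  have lin1: "clinear L1" and lin2: "clinear L2"
    using L1 L2 bounded_clinear_def by blast+
  obtain K1 where K1: "K1 \<ge> 0" "\<And>x. norm (L1 x) \<le> norm x * K1" using bounded_clinear_pos[OF L1] by blast
  obtain K2 where K2: "K2 \<ge> 0" "\<And>x. norm (L2 x) \<le> norm x * K2" using bounded_clinear_pos[OF L2] by blast
  have bc: "bounded_clinear (\<Gamma> \<omega>) \<and> range (\<Gamma> \<omega>) \<subseteq> K \<omega>" if \<omega>: "\<omega> \<in> space M" for \<omega>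
  proof -
    have la: "bounded_clinear (\<Lambda> \<omega>)" "range (\<Lambda> \<omega>) \<subseteq> K \<omega>"
      using parseval_parts(1)[OF \<Lambda>] \<omega> by auto
    have lb: "bounded_clinear (\<Theta> \<omega>)" "range (\<Theta> \<omega>) \<subseteq> K \<omega>"
      using parseval_parts(1)[OF \<Theta>] \<omega> by auto
    have lina: "clinear (\<Lambda> \<omega>)" and linb: "clinear (\<Theta> \<omega>)"
      using la lb bounded_clinear_def by blast+
    obtain Ka where Ka: "Ka \<ge> 0" "\<And>x. norm (\<Lambda> \<omega> x) \<le> norm x * Ka" using bounded_clinear_pos[OF la(1)] by blast
    obtain Kb where Kb: "Kb \<ge> 0" "\<And>x. norm (\<Theta> \<omega> x) \<le> norm x * Kb" using bounded_clinear_pos[OF lb(1)] by blast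
    have G: "\<Gamma> \<omega> = (\<lambda>f. \<Lambda> \<omega> (L1 f) + \<Theta> \<omega> (L2 f))" using \<Gamma> \<omega> by auto
    have "clinear (\<Gamma> \<omega>)"
      unfolding G clinear_def
      by (simp add: clinear_add[OF lin1] clinear_add[OF lin2] clinear_add[OF lina] clinear_add[OF linb]
          clinear_scaleC[OF lin1] clinear_scaleC[OF lin2] clinear_scaleC[OF lina] clinear_scaleC[OF linb]
          scaleC_add_right)
    moreover have "norm (\<Gamma> \<omega> x) \<le> norm x * (K1 * Ka + K2 * Kb)" for x
    proof -
      have "norm (\<Gamma> \<omega> x) \<le> norm (\<Lambda> \<omega> (L1 x)) + norm (\<Theta> \<omega> (L2 x))"
        unfolding G by (rule norm_triangle_ineq)
      also have "\<dots> \<le> norm (L1 x) * Ka + norm (L2 x) * Kb" using Ka Kb by (intro add_mono) auto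
      also have "\<dots> \<le> norm x * K1 * Ka + norm x * K2 * Kb"
        using K1 K2 Ka Kb by (intro add_mono mult_right_mono) auto
      finally show ?thesis by (simp add: algebra_simps)
    qed
    moreover have "range (\<Gamma> \<omega>) \<subseteq> K \<omega>"
    proof
      fix y assume "y \<in> range (\<Gamma> \<omega>)"
      then obtain f where y: "y = \<Lambda> \<omega> (L1 f) + \<Theta> \<omega> (L2 f)" using G by auto
      have "\<Lambda> \<omega> (L1 f) \<in> K \<omega>" "\<Theta> \<omega> (L2 f) \<in> K \<omega>" using la lb by auto
      then show "y \<in> K \<omega>" using K \<omega> unfolding y closed_csubspace_def by blast
    qed
    ultimately show ?thesis unfolding bounded_clinear_def by blast
  qed
  have sm: "strongly_measurable M (\<lambda>\<omega>. \<Gamma> \<omega> f)" for f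
    by (rule sm_add[OF parseval_parts(2)[OF \<Lambda>] parseval_parts(2)[OF \<Theta>]]) (use \<Gamma> in auto)
  show "parseval_cont_g_frame M K \<Gamma>"
    unfolding parseval_cont_g_frame_def cont_g_frame_def g_family_def
    using bc sm int by (intro conjI allI exI[of _ 1]) auto
qed

lemma adjoint_sum_iff:
  fixes L1 L2 :: "'h::chilbert_space \<Rightarrow> 'h"
  assumes L1: "bounded_clinear L1" and L2: "bounded_clinear L2"
  shows "(\<lambda>x. cadjoint L1 (L1 x) + cadjoint L2 (L2 x)) = id
     \<longleftrightarrow> (\<forall>f. (norm (L1 f))\<^sup>2 + (norm (L2 f))\<^sup>2 = (norm f)\<^sup>2)"
proof -
  have lin1: "clinear L1" and lin2: "clinear L2"
    using L1 L2 bounded_clinear_def by blast+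
  define T where "T = (\<lambda>x. cadjoint L1 (L1 x) + cadjoint L2 (L2 x))"
  have Tin: "cinner (T x) y = cinner (L1 x) (L1 y) + cinner (L2 x) (L2 y)" for x y
  proof -
    have "cinner (T x) y = cnj (cinner y (cadjoint L1 (L1 x))) + cnj (cinner y (cadjoint L2 (L2 x)))"
      unfolding T_def by (metis cinner_add_left cinner_commute)
    also have "\<dots> = cnj (cinner (L1 y) (L1 x)) + cnj (cinner (L2 y) (L2 x))"
      by (simp add: cadjoint_prop[OF L1] cadjoint_prop[OF L2])
    finally show ?thesis by (metis cinner_commute)
  qed
  show ?thesis unfolding T_def[symmetric]
  proof
    assume T: "T = id"
    show "\<forall>f. (norm (L1 f))\<^sup>2 + (norm (L2 f))\<^sup>2 = (norm f)\<^sup>2"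
    proof
      fix f
      have "cinner f f = cinner (L1 f) (L1 f) + cinner (L2 f) (L2 f)" using Tin[of f f] T by simp
      then have "Re (cinner f f) = Re (cinner (L1 f) (L1 f)) + Re (cinner (L2 f) (L2 f))" by simp
      then show "(norm (L1 f))\<^sup>2 + (norm (L2 f))\<^sup>2 = (norm f)\<^sup>2" by (simp add: cinner_self_Re)
    qed
  next
    assume id: "\<forall>f. (norm (L1 f))\<^sup>2 + (norm (L2 f))\<^sup>2 = (norm f)\<^sup>2"
    define D where "D = (\<lambda>x y. cinner (L1 x) (L1 y) + cinner (L2 x) (L2 y) - cinner x y)"
    have D0: "D x y = 0" for x y
    proof (rule polarization_zero[of D])
      show "D (x + y) z = D x z + D y z" for x y z
        unfolding D_def by (simp add: clinear_add[OF lin1] clinear_add[OF lin2] cinner_add_left)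
      show "D x (y + z) = D x y + D x z" for x y z
        unfolding D_def by (simp add: clinear_add[OF lin1] clinear_add[OF lin2] cinner_add_right)
      show "D (scaleC c x) y = c * D x y" for c x y
        unfolding D_def by (simp add: clinear_scaleC[OF lin1] clinear_scaleC[OF lin2] cinner_scaleC_left algebra_simps)
      show "D x (scaleC c y) = cnj c * D x y" for c x y
        unfolding D_def by (simp add: clinear_scaleC[OF lin1] clinear_scaleC[OF lin2] cinner_scaleC_right algebra_simps)
      show "D x x = 0" for x
      proof -
        have "complex_of_real ((norm (L1 x))\<^sup>2 + (norm (L2 x))\<^sup>2) = complex_of_real ((norm x)\<^sup>2)"
          using id by simp
        then show ?thesis unfolding D_def by (simp add: cinner_self)
      qed
    qed
    show "T = id"
    proof
      fix x
      have "cinner (T x - x) y = 0" for y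
        using D0[of x y] Tin[of x y] unfolding D_def by (simp add: cinner_diff_left)
      then have "cinner (T x - x) (T x - x) = 0" by blast
      then show "T x = id x" by (simp add: cinner_eq_zero_iff)
    qed
  qed
qed

lemma bounded_clinear_scaleC: "bounded_clinear (scaleC c :: 'a::complex_inner \<Rightarrow> 'a)"
  unfolding bounded_clinear_def clinear_def
  by (auto simp: scaleC_add_right scaleC_scaleC mult.commute norm_scaleC intro!: exI[of _ "cmod c"])

theorem corollary2p8:
  fixes M :: "'w measure"
    and K :: "'w \<Rightarrow> 'k::chilbert_space set"
    and \<Lambda> \<Theta> :: "'w \<Rightarrow> 'h::chilbert_space \<Rightarrow> 'k"
    and L1 L2 :: "'h \<Rightarrow> 'h"
  assumes nontriv: "\<exists>x::'h. x \<noteq> 0"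
    and K: "\<forall>\<omega>\<in>space M. closed_csubspace (K \<omega>)"
    and \<Lambda>: "parseval_cont_g_frame M K \<Lambda>"
    and \<Theta>: "parseval_cont_g_frame M K \<Theta>"
    and disj: "strongly_disjoint M \<Lambda> \<Theta>"
    and L1: "bounded_clinear L1"
    and L2: "bounded_clinear L2"
  shows "((\<lambda>x. cadjoint L1 (L1 x) + cadjoint L2 (L2 x)) = id
            \<longleftrightarrow> parseval_cont_g_frame M K (\<lambda>\<omega> f. \<Lambda> \<omega> (L1 f) + \<Theta> \<omega> (L2 f)))
      \<and> (\<forall>\<alpha> \<beta> :: complex.
            parseval_cont_g_frame M K (\<lambda>\<omega> f. scaleC \<alpha> (\<Lambda> \<omega> f) + scaleC \<beta> (\<Theta> \<omega> f))
            \<longleftrightarrow> (cmod \<alpha>)\<^sup>2 + (cmod \<beta>)\<^sup>2 = 1)"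
proof
  show "(\<lambda>x. cadjoint L1 (L1 x) + cadjoint L2 (L2 x)) = id
            \<longleftrightarrow> parseval_cont_g_frame M K (\<lambda>\<omega> f. \<Lambda> \<omega> (L1 f) + \<Theta> \<omega> (L2 f))"
    using adjoint_sum_iff[OF L1 L2] key[OF K \<Lambda> \<Theta> disj L1 L2, of "\<lambda>\<omega> f. \<Lambda> \<omega> (L1 f) + \<Theta> \<omega> (L2 f)"]
    by simp
  show "\<forall>\<alpha> \<beta> :: complex.
            parseval_cont_g_frame M K (\<lambda>\<omega> f. scaleC \<alpha> (\<Lambda> \<omega> f) + scaleC \<beta> (\<Theta> \<omega> f))
            \<longleftrightarrow> (cmod \<alpha>)\<^sup>2 + (cmod \<beta>)\<^sup>2 = 1"
  proof (intro allI)
    fix \<alpha> \<beta> :: complex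
    have G: "\<forall>\<omega>\<in>space M. \<forall>f. scaleC \<alpha> (\<Lambda> \<omega> f) + scaleC \<beta> (\<Theta> \<omega> f)
                = \<Lambda> \<omega> (scaleC \<alpha> f) + \<Theta> \<omega> (scaleC \<beta> f)"
    proof (intro ballI allI)
      fix \<omega> f assume \<omega>: "\<omega> \<in> space M"
      have "clinear (\<Lambda> \<omega>)" "clinear (\<Theta> \<omega>)"
        using parseval_parts(1)[OF \<Lambda>] parseval_parts(1)[OF \<Theta>] \<omega> bounded_clinear_def by blast+
      then show "scaleC \<alpha> (\<Lambda> \<omega> f) + scaleC \<beta> (\<Theta> \<omega> f) = \<Lambda> \<omega> (scaleC \<alpha> f) + \<Theta> \<omega> (scaleC \<beta> f)"
        by (simp add: clinear_scaleC)
    qed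
    have eq: "(\<forall>f::'h. (norm (scaleC \<alpha> f))\<^sup>2 + (norm (scaleC \<beta> f))\<^sup>2 = (norm f)\<^sup>2)
        \<longleftrightarrow> (cmod \<alpha>)\<^sup>2 + (cmod \<beta>)\<^sup>2 = 1"
    proof
      assume h: "\<forall>f::'h. (norm (scaleC \<alpha> f))\<^sup>2 + (norm (scaleC \<beta> f))\<^sup>2 = (norm f)\<^sup>2"
      obtain x :: 'h where x: "x \<noteq> 0" using nontriv by blast
      have "((cmod \<alpha>)\<^sup>2 + (cmod \<beta>)\<^sup>2) * (norm x)\<^sup>2 = 1 * (norm x)\<^sup>2"
        using h[rule_format, of x] by (simp add: norm_scaleC power_mult_distrib algebra_simps)
      then show "(cmod \<alpha>)\<^sup>2 + (cmod \<beta>)\<^sup>2 = 1" using x by simp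
    next
      assume h: "(cmod \<alpha>)\<^sup>2 + (cmod \<beta>)\<^sup>2 = 1"
      show "\<forall>f::'h. (norm (scaleC \<alpha> f))\<^sup>2 + (norm (scaleC \<beta> f))\<^sup>2 = (norm f)\<^sup>2"
      proof
        fix f :: 'h
        have "(norm (scaleC \<alpha> f))\<^sup>2 + (norm (scaleC \<beta> f))\<^sup>2 = ((cmod \<alpha>)\<^sup>2 + (cmod \<beta>)\<^sup>2) * (norm f)\<^sup>2"
          by (simp add: norm_scaleC power_mult_distrib algebra_simps)
        then show "(norm (scaleC \<alpha> f))\<^sup>2 + (norm (scaleC \<beta> f))\<^sup>2 = (norm f)\<^sup>2" using h by simp
      qed
    qed
    show "parseval_cont_g_frame M K (\<lambda>\<omega> f. scaleC \<alpha> (\<Lambda> \<omega> f) + scaleC \<beta> (\<Theta> \<omega> f))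
            \<longleftrightarrow> (cmod \<alpha>)\<^sup>2 + (cmod \<beta>)\<^sup>2 = 1"
      using key[OF K \<Lambda> \<Theta> disj bounded_clinear_scaleC bounded_clinear_scaleC G] eq by simp
  qed
qed

end
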